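(* Let $k,l$ be positive integers, $f$ a $k$-variable Boolean function and $g$ a balanced $l$-variable Boolean function. For $0\le i\le k$ let $a_i=\max_{\mathbf{w}\in\mathbb{F}_2^k,\ \mathrm{wt}(\mathbf{w})=i} W_f^2(\mathbf{w})$. Then $$H_\infty(f\diamond g)=\min_{i\in\{0,\ldots,k\},\ a_i>0}\bigl(-\log a_i + i\cdot H_\infty(g)\bigr).$$
   Context: A Boolean function on $n$ variables is a map $\mathbb{F}_2^n\to\mathbb{F}_2$; it is balanced if it takes the value $1$ on exactly $2^{n-1}$ inputs. The Walsh transform is $W_f(\bm{\alpha})=2^{-n}\sum_{\mathbf{x}\in\mathbb{F}_2^n}(-1)^{f(\mathbf{x})\oplus\langle\mathbf{x},\bm{\alpha}\rangle}$ with $\langle\mathbf{x},\bm{\alpha}\rangle=\bigoplus_i x_i\alpha_i$. $\mathrm{wt}(\mathbf{w})$ is the Hamming weight. All logarithms are base 2. The Fourier min-entropy is $H_\infty(f)=\min_{\bm{\alpha}:W_f^2(\bm{\alpha})\ne0}\log(1/W_f^2(\bm{\alpha}))$. Disjoint composition: for $f$ on $k$ variables and $g$ on $l$ variables, $f\diamond g$ is the $kl$-variable function $(f\diamond g)(\mathbf{x})=f(g(\mathbf{x}^{(1)}),\ldots,g(\mathbf{x}^{(k)}))$, where $\mathbf{x}^{(i)}=(x_{(i-1)l+1},\ldots,x_{il})$. *)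

theory Defs
  imports Complex_Main
begin

text \<open>Vectors in F_2^n are boolean lists of length n; a Boolean function on n
variables is a map bool list \<Rightarrow> bool, of which only the values on cube n matter.\<close>

definition cube :: "nat \<Rightarrow> bool list set" where
  "cube n = {xs. length xs = n}"

definition inner :: "bool list \<Rightarrow> bool list \<Rightarrow> bool" where
  "inner x a = odd (card {i. i < length x \<and> x ! i \<and> a ! i})"

definition wt :: "bool list \<Rightarrow> nat" where
  "wt w = card {i. i < length w \<and> w ! i}"

definition walsh :: "nat \<Rightarrow> (bool list \<Rightarrow> bool) \<Rightarrow> bool list \<Rightarrow> real" where
  "walsh n f \<alpha> = (1 / 2 ^ n) * (\<Sum>x\<in>cube n. (if f x = inner x \<alpha> then 1 else -1))"

definition balanced :: "nat \<Rightarrow> (bool list \<Rightarrow> bool) \<Rightarrow> bool" where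
  "balanced n f \<longleftrightarrow> card {x \<in> cube n. f x} = 2 ^ (n - 1)"

definition fourier_min_entropy :: "nat \<Rightarrow> (bool list \<Rightarrow> bool) \<Rightarrow> real" where
  "fourier_min_entropy n f =
     Min {log 2 (1 / (walsh n f \<alpha>)\<^sup>2) | \<alpha>. \<alpha> \<in> cube n \<and> (walsh n f \<alpha>)\<^sup>2 \<noteq> 0}"

definition dcomp :: "nat \<Rightarrow> nat \<Rightarrow> (bool list \<Rightarrow> bool) \<Rightarrow> (bool list \<Rightarrow> bool) \<Rightarrow> bool list \<Rightarrow> bool" where
  "dcomp k l f g x = f (map (\<lambda>i. g (take l (drop (i * l) x))) [0..<k])"

definition max_walsh_sq_wt :: "nat \<Rightarrow> (bool list \<Rightarrow> bool) \<Rightarrow> nat \<Rightarrow> real" where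
  "max_walsh_sq_wt k f i = Max {(walsh k f w)\<^sup>2 | w. w \<in> cube k \<and> wt w = i}"

end

theory Submission imports Defs begin

definition chi :: "bool \<Rightarrow> real" where "chi b = (if b then -1 else 1)"

lemma chi_neq: "chi (p \<noteq> q) = chi p * chi q" by (simp add: chi_def)
lemma chi_eq_not: "chi (p = (\<not> q)) = chi p * chi q" by (simp add: chi_def)

lemma walsh_alt: "walsh n f \<alpha> = (1/2^n) * (\<Sum>x\<in>cube n. chi (f x) * chi (inner x \<alpha>))"
  unfolding walsh_def chi_def by (intro arg_cong[where f="\<lambda>s. _ * s"] sum.cong) auto

lemma cube_0: "cube 0 = {[]}" by (auto simp: cube_def)

lemma cube_Suc: "cube (Suc n) = Cons False ` cube n \<union> Cons True ` cube n"
proof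
  show "cube (Suc n) \<subseteq> Cons False ` cube n \<union> Cons True ` cube n"
  proof
    fix x assume "x \<in> cube (Suc n)"
    then obtain b v where "x = b # v" "length v = n" by (auto simp: cube_def length_Suc_conv)
    then show "x \<in> Cons False ` cube n \<union> Cons True ` cube n" by (cases b) (auto simp: cube_def)
  qed
qed (auto simp: cube_def)

lemma finite_cube: "finite (cube n)" by (induction n) (auto simp: cube_0 cube_Suc)

lemma sum_cube_Suc: "(\<Sum>x\<in>cube (Suc n). F x) = (\<Sum>v\<in>cube n. F (False#v) + F (True#v))"
  unfolding cube_Suc
  by (subst sum.union_disjoint) (auto simp: finite_cube sum.reindex sum.distrib)

lemma sum_cube_add: "(\<Sum>x\<in>cube (m+n). F x) = (\<Sum>x\<in>cube m. \<Sum>y\<in>cube n. F (x@y))"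
proof (induction m arbitrary: F)
  case 0 then show ?case by (simp add: cube_0)
next
  case (Suc m)
  show ?case by (simp add: sum_cube_Suc Suc.IH sum.distrib)
qed

lemma card_cube: "card (cube n) = 2^n"
proof (induction n)
  case 0 then show ?case by (simp add: cube_0)
next
  case (Suc n)
  have "card (cube (Suc n)) = 2 * card (cube n)"
    unfolding card_eq_sum sum_cube_Suc by (simp add: sum_distrib_left)
  then show ?case using Suc by simp
qed

lemma card_less_Suc: "card {i. i < Suc n \<and> P i} = (if P 0 then 1 else 0) + card {i. i < n \<and> P (Suc i)}"
proof -
  have e: "{i. i < Suc n \<and> P i} = (if P 0 then {0} else {}) \<union> Suc ` {i. i < n \<and> P (Suc i)}"
    by (auto simp: image_iff less_Suc_eq_0_disj)
  have "card (Suc ` {i. i < n \<and> P (Suc i)}) = card {i. i < n \<and> P (Suc i)}"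
    by (rule card_image) simp
  then show ?thesis unfolding e by (cases "P 0") auto
qed

lemma inner_Nil: "inner [] a = False" by (simp add: inner_def)
lemma inner_Cons: "inner (b#v) (c#w) = ((b \<and> c) \<noteq> inner v w)"
  unfolding inner_def by (cases "b \<and> c") (auto simp: card_less_Suc)
lemma wt_Nil: "wt [] = 0" by (simp add: wt_def)
lemma wt_Cons: "wt (b#w) = (if b then 1 else 0) + wt w"
  unfolding wt_def by (simp add: card_less_Suc)

lemma inner_append: "length x = length a \<Longrightarrow> inner (x@y) (a@r) = (inner x a \<noteq> inner y r)"
proof (induction x arbitrary: a)
  case Nil then show ?case by (simp add: inner_Nil)
next
  case (Cons b x) then obtain c a' where "a = c # a'" "length x = length a'" by (cases a) auto
  then show ?case using Cons by (auto simp: inner_Cons)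
qed

lemma walsh_Cons: "walsh (Suc k) f (c#w) = (walsh k (\<lambda>v. f (False#v)) w + chi c * walsh k (\<lambda>v. f (True#v)) w) / 2"
proof -
  have "(\<Sum>x\<in>cube (Suc k). chi (f x) * chi (inner x (c#w))) = (\<Sum>v\<in>cube k. chi (f (False#v)) * chi (inner v w)) + chi c * (\<Sum>v\<in>cube k. chi (f (True#v)) * chi (inner v w))"
    unfolding sum_cube_Suc inner_Cons by (simp add: chi_eq_not sum.distrib sum_distrib_left mult_ac)
  then show ?thesis unfolding walsh_alt by (simp add: algebra_simps)
qed

lemma walsh_append: "length a = l \<Longrightarrow> walsh (l+m) F (a@r) = (1/2^l) * (\<Sum>x\<in>cube l. chi (inner x a) * walsh m (\<lambda>y. F (x@y)) r)"
proof -
  assume a: "length a = l"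
  have "(\<Sum>y\<in>cube m. chi (F (x@y)) * chi (inner (x@y) (a@r))) = chi (inner x a) * (\<Sum>y\<in>cube m. chi(F(x@y)) * chi(inner y r))" if "x \<in> cube l" for x
    using that a by (simp add: cube_def inner_append chi_neq chi_eq_not sum_distrib_left mult_ac)
  then have "(\<Sum>x\<in>cube (l+m). chi (F x) * chi (inner x (a@r))) = (\<Sum>x\<in>cube l. chi (inner x a) * (\<Sum>y\<in>cube m. chi(F(x@y)) * chi(inner y r)))"
    unfolding sum_cube_add by (rule sum.cong[OF refl])
  then show ?thesis unfolding walsh_alt power_add by (simp add: sum_distrib_left mult_ac)
qed

lemma orth: "length b = l \<Longrightarrow> (\<Sum>x\<in>cube l. chi (inner x b)) = (if b = replicate l False then 2^l else 0)"
proof (induction l arbitrary: b)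
  case 0 then show ?case by (simp add: cube_0 inner_Nil chi_def)
next
  case (Suc l)
  then obtain c w where b: "b = c # w" "length w = l" by (cases b) auto
  have "(\<Sum>x\<in>cube (Suc l). chi (inner x b)) = (\<Sum>v\<in>cube l. chi (inner v w)) * (1 + chi c)"
    unfolding sum_cube_Suc b inner_Cons by (simp add: chi_neq chi_eq_not sum_distrib_right sum.distrib sum_distrib_left algebra_simps)
  then show ?case using Suc.IH[OF b(2)] b by (auto simp: chi_def)
qed

lemma inner_zeros: "inner x (replicate (length x) False) = False"
  by (induction x) (auto simp: inner_Nil inner_Cons)

lemma inner_zeros': "x \<in> cube l \<Longrightarrow> inner x (replicate l False) = False"
  using inner_zeros[of x] by (simp add: cube_def)

lemma walsh_zero_bal:
  assumes "balanced l g" "l > 0"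
  shows "walsh l g (replicate l False) = 0"
proof -
  define G where "G = {x\<in>cube l. g x}"
  define N where "N = {x\<in>cube l. \<not> g x}"
  have U: "cube l = G \<union> N" "G \<inter> N = {}" by (auto simp: G_def N_def)
  have fG: "finite G" and fN: "finite N" using finite_cube by (auto simp: G_def N_def)
  have cU: "card G + card N = card (cube l)" using card_Un_disjoint[OF fG fN U(2)] U(1) by simp
  have "(\<Sum>x\<in>cube l. chi (g x) * chi (inner x (replicate l False))) = (\<Sum>x\<in>cube l. chi (g x))"
    by (intro sum.cong refl) (simp add: chi_def inner_zeros')
  also have "\<dots> = (\<Sum>x\<in>G. chi (g x)) + (\<Sum>x\<in>N. chi (g x))"
    unfolding U(1) by (rule sum.union_disjoint[OF fG fN U(2)])
  also have "(\<Sum>x\<in>G. chi (g x)) = (\<Sum>x\<in>G. -1)" by (intro sum.cong refl) (simp add: G_def chi_def)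
  also have "(\<Sum>x\<in>N. chi (g x)) = (\<Sum>x\<in>N. 1)" by (intro sum.cong refl) (simp add: N_def chi_def)
  also have "(\<Sum>x\<in>G. (-1::real)) + (\<Sum>x\<in>N. 1) = real (card N) - real (card G)" by simp
  also have "\<dots> = 0"
  proof -
    have "(2::nat)^l = 2 * 2^(l-1)" using assms(2) by (cases l) auto
    moreover have "card G = 2^(l-1)" using assms(1) by (simp add: balanced_def G_def)
    ultimately have "card N = card G" using cU card_cube[of l] by simp
    then show ?thesis by simp
  qed
  finally show ?thesis unfolding walsh_alt by simp
qed

lemma dcomp_0: "dcomp 0 l f g x = f []" by (simp add: dcomp_def)

lemma drop_blk: "length b = l \<Longrightarrow> drop (Suc i * l) (b@r) = drop (i*l) r"
proof -
  assume "length b = l"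
  then have "drop (Suc i * l) (b@r) = drop (i*l) (drop l (b@r))" by (simp add: drop_drop add.commute)
  then show ?thesis using \<open>length b = l\<close> by simp
qed

lemma dcomp_append: "length b = l \<Longrightarrow> dcomp (Suc k) l f g (b@r) = dcomp k l (\<lambda>v. f (g b # v)) g r"
proof -
  assume b: "length b = l"
  have u: "[0..<Suc k] = 0 # map Suc [0..<k]" by (simp add: upt_conv_Cons map_Suc_upt del: upt_Suc)
  have "map (\<lambda>i. g (take l (drop (i*l) (b@r)))) [0..<Suc k] = g b # map (\<lambda>i. g (take l (drop (i*l) r))) [0..<k]"
    unfolding u using b by simp
  then show ?thesis unfolding dcomp_def by simp
qed

definition nz :: "nat \<Rightarrow> bool list \<Rightarrow> bool" where "nz l b = (b \<noteq> replicate l False)"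
definition phi :: "nat \<Rightarrow> (bool list \<Rightarrow> bool) \<Rightarrow> bool list \<Rightarrow> real" where
  "phi l g b = (if b = replicate l False then 1 else walsh l g b)"

lemma lin_sum: "(1/(2::real)^l) * (\<Sum>x\<in>S. c1 * u x + c2 * v x) = c1 * ((1/2^l) * (\<Sum>x\<in>S. u x)) + c2 * ((1/(2::real)^l) * (\<Sum>x\<in>S. v x))"
  by (simp add: sum.distrib sum_distrib_left algebra_simps)

lemma comp_formula:
  assumes bal: "balanced l g" and l: "l > 0"
  shows "length bs = k \<Longrightarrow> \<forall>b\<in>set bs. length b = l \<Longrightarrow>
    walsh (k*l) (dcomp k l f g) (concat bs) = walsh k f (map (nz l) bs) * prod_list (map (phi l g) bs)"
proof (induction bs arbitrary: k f)
  case Nil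
  then show ?case by (simp add: walsh_def cube_0 dcomp_def)
next
  case (Cons b bs)
  then obtain k' where k: "k = Suc k'" and lb: "length b = l" and lbs: "length bs = k'" and all: "\<forall>b\<in>set bs. length b = l" by auto
  define w where "w = map (nz l) bs"
  define P where "P = prod_list (map (phi l g) bs)"
  define A where "A = walsh k' (\<lambda>v. f (True#v)) w"
  define B where "B = walsh k' (\<lambda>v. f (False#v)) w"
  have "walsh (k*l) (dcomp k l f g) (concat (b#bs)) =
     (1/2^l) * (\<Sum>x\<in>cube l. chi (inner x b) * walsh (k'*l) (\<lambda>y. dcomp (Suc k') l f g (x@y)) (concat bs))"
    using walsh_append[OF lb, of "k'*l" "dcomp (Suc k') l f g" "concat bs"] k by simp
  also have "\<dots> = (1/2^l) * (\<Sum>x\<in>cube l. chi (inner x b) * (walsh k' (\<lambda>v. f (g x # v)) w * P))"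
  proof -
    have "walsh (k'*l) (\<lambda>y. dcomp (Suc k') l f g (x@y)) (concat bs) = walsh k' (\<lambda>v. f (g x # v)) w * P"
      if "x \<in> cube l" for x
    proof -
      have "(\<lambda>y. dcomp (Suc k') l f g (x@y)) = dcomp k' l (\<lambda>v. f (g x # v)) g"
        using that dcomp_append[of x l k' f g] by (auto simp: cube_def)
      then show ?thesis using Cons.IH[OF lbs all] by (simp add: w_def P_def)
    qed
    then show ?thesis by simp
  qed
  also have "\<dots> = (1/2^l) * (\<Sum>x\<in>cube l. ((A+B)/2*P) * chi (inner x b) + ((B-A)/2*P) * (chi (g x) * chi (inner x b)))"
  proof -
    have key: "(A+B)/2 + chi c * ((B-A)/2) = (if c then A else B)" for c
      by (cases c) (simp_all add: chi_def field_simps)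
    have "chi (inner x b) * (walsh k' (\<lambda>v. f (g x # v)) w * P) = ((A+B)/2*P) * chi (inner x b) + ((B-A)/2*P) * (chi (g x) * chi (inner x b))" for x
    proof -
      have "walsh k' (\<lambda>v. f (g x # v)) w = (if g x then A else B)" by (simp add: A_def B_def)
      also have "\<dots> = (A+B)/2 + chi (g x) * ((B-A)/2)" by (rule key[symmetric])
      finally show ?thesis by (simp add: algebra_simps)
    qed
    then show ?thesis by simp
  qed
  also have "\<dots> = ((A+B)/2*P) * ((1/2^l) * (\<Sum>x\<in>cube l. chi (inner x b))) + ((B-A)/2*P) * walsh l g b"
    unfolding walsh_alt by (rule lin_sum)
  also have "\<dots> = walsh k f (map (nz l) (b#bs)) * prod_list (map (phi l g) (b#bs))"
  proof (cases "b = replicate l False")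
    case True
    then show ?thesis using orth[OF lb] walsh_zero_bal[OF bal l]
      by (simp add: k walsh_Cons nz_def phi_def chi_def A_def B_def w_def P_def algebra_simps)
  next
    case False
    then show ?thesis using orth[OF lb]
      by (simp add: k walsh_Cons nz_def phi_def chi_def A_def B_def w_def P_def algebra_simps)
  qed
  finally show ?case .
qed

lemma decomp: "length \<alpha> = k*l \<Longrightarrow> \<exists>bs. length bs = k \<and> (\<forall>b\<in>set bs. length b = l) \<and> \<alpha> = concat bs"
proof (induction k arbitrary: \<alpha>)
  case 0 then show ?case by simp
next
  case (Suc k)
  then have "length (drop l \<alpha>) = k*l" by simp
  from Suc.IH[OF this] obtain bs where "length bs = k" "\<forall>b\<in>set bs. length b = l" "drop l \<alpha> = concat bs" by blast
  moreover have "length (take l \<alpha>) = l" using Suc.prems by simp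
  moreover have "\<alpha> = take l \<alpha> @ drop l \<alpha>" by (rule append_take_drop_id[symmetric])
  ultimately have "length (take l \<alpha> # bs) = Suc k \<and> (\<forall>b\<in>set (take l \<alpha> # bs). length b = l) \<and> \<alpha> = concat (take l \<alpha> # bs)"
    by (metis concat.simps(2) length_Cons list.set_intros set_ConsD)
  then show ?case by blast
qed

lemma length_concat_eq: "\<forall>b\<in>set bs. length b = l \<Longrightarrow> length (concat bs) = length bs * l"
  by (induction bs) auto

lemma walsh_nonzero: "\<exists>w\<in>cube n. walsh n f w \<noteq> 0"
proof (induction n arbitrary: f)
  case 0 then show ?case by (auto simp: walsh_def cube_0)
next
  case (Suc n)
  from Suc.IH[of "\<lambda>v. f (False#v)"] obtain w where w: "w \<in> cube n" "walsh n (\<lambda>v. f (False#v)) w \<noteq> 0" by blast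
  have c: "False # w \<in> cube (Suc n)" "True # w \<in> cube (Suc n)" using w(1) by (auto simp: cube_def)
  show ?case
  proof (cases "walsh (Suc n) f (False#w) = 0")
    case True
    then have "walsh (Suc n) f (True#w) \<noteq> 0" using w(2) by (simp add: walsh_Cons chi_def)
    then show ?thesis using c by blast
  next
    case False then show ?thesis using c by blast
  qed
qed

lemma wt_le: "wt w \<le> length w" by (induction w) (auto simp: wt_Nil wt_Cons)
lemma wt_zeros: "wt (replicate j False) = 0" by (induction j) (auto simp: wt_Nil wt_Cons)
lemma wt_rep: "wt (replicate i True @ replicate j False) = i" by (induction i) (auto simp: wt_zeros wt_Cons)

lemma constr_nz: "\<beta> \<noteq> replicate l False \<Longrightarrow> map (nz l) (map (\<lambda>c. if c then \<beta> else replicate l False) w) = w"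
  by (induction w) (auto simp: nz_def)

lemma constr_phi: "\<beta> \<noteq> replicate l False \<Longrightarrow> prod_list (map (phi l g) (map (\<lambda>c. if c then \<beta> else replicate l False) w)) = walsh l g \<beta> ^ wt w"
  by (induction w) (auto simp: phi_def wt_Nil wt_Cons)

lemma constr_len: "length \<beta> = l \<Longrightarrow> \<forall>b\<in>set (map (\<lambda>c. if c then \<beta> else replicate l False) w). length b = l"
  by auto

lemma bound:
  "\<forall>b\<in>set bs. phi l g b \<noteq> 0 \<and> (b \<noteq> replicate l False \<longrightarrow> log 2 (1/(walsh l g b)^2) \<ge> H) \<Longrightarrow>
   log 2 (1/(prod_list (map (phi l g) bs))^2) \<ge> real (wt (map (nz l) bs)) * H"
proof (induction bs)
  case Nil then show ?case by (simp add: wt_Nil)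
next
  case (Cons b bs)
  have ne: "prod_list (map (phi l g) bs) \<noteq> 0" using Cons.prems by (auto simp: prod_list_zero_iff)
  have pb: "phi l g b \<noteq> 0" using Cons.prems by auto
  have eq: "log 2 (1/(prod_list (map (phi l g) (b#bs)))^2) = log 2 (1/(phi l g b)^2) + log 2 (1/(prod_list (map (phi l g) bs))^2)"
    using ne pb by (simp add: log_recip log_mult power_mult_distrib)
  have IH: "log 2 (1/(prod_list (map (phi l g) bs))^2) \<ge> real (wt (map (nz l) bs)) * H" using Cons by auto
  show ?case
  proof (cases "b = replicate l False")
    case True
    then have "phi l g b = 1" "\<not> nz l b" by (simp_all add: phi_def nz_def)
    then show ?thesis using eq IH by (simp add: wt_Cons)
  next
    case False
    then have "log 2 (1/(phi l g b)^2) \<ge> H" using Cons.prems by (simp add: phi_def)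
    moreover have "nz l b" using False by (simp add: nz_def)
    ultimately show ?thesis using eq IH by (simp add: wt_Cons algebra_simps)
  qed
qed

theorem theorem4:
  fixes k l :: nat and f g :: "bool list \<Rightarrow> bool"
  assumes "k > 0" and "l > 0" and "balanced l g"
  shows "fourier_min_entropy (k * l) (dcomp k l f g) =
    Min {- log 2 (max_walsh_sq_wt k f i) + real i * fourier_min_entropy l g
          | i. i \<le> k \<and> max_walsh_sq_wt k f i > 0}"
proof -
  define F where "F = dcomp k l f g"
  define H where "H = fourier_min_entropy l g"
  define HS where "HS = {log 2 (1/(walsh l g \<alpha>)^2) | \<alpha>. \<alpha> \<in> cube l \<and> (walsh l g \<alpha>)^2 \<noteq> 0}"
  have HH: "H = Min HS" by (simp add: H_def HS_def fourier_min_entropy_def)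
  have HS_img: "HS = (\<lambda>\<alpha>. log 2 (1/(walsh l g \<alpha>)^2)) ` {\<alpha>\<in>cube l. (walsh l g \<alpha>)^2 \<noteq> 0}"
    by (auto simp: HS_def)
  have finHS: "finite HS" unfolding HS_img using finite_cube by simp
  obtain \<beta>0 where "\<beta>0 \<in> cube l" "walsh l g \<beta>0 \<noteq> 0" using walsh_nonzero by blast
  then have HSne: "HS \<noteq> {}" by (auto simp: HS_def)
  have "H \<in> HS" unfolding HH using finHS HSne by (rule Min_in)
  then obtain \<beta> where \<beta>: "\<beta> \<in> cube l" "walsh l g \<beta> \<noteq> 0" "H = log 2 (1/(walsh l g \<beta>)^2)"
    by (auto simp: HS_def)
  have \<beta>nz: "\<beta> \<noteq> replicate l False" using \<beta>(2) walsh_zero_bal[OF assms(3,2)] by auto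
  have Hle: "H \<le> log 2 (1/(walsh l g b)^2)" if "b \<in> cube l" "walsh l g b \<noteq> 0" for b
    unfolding HH using finHS that by (intro Min_le) (auto simp: HS_def)
  define a where "a i = max_walsh_sq_wt k f i" for i
  have Wset_fin: "finite {(walsh k f w)\<^sup>2 | w. w \<in> cube k \<and> wt w = i}" for i
  proof -
    have "{(walsh k f w)\<^sup>2 | w. w \<in> cube k \<and> wt w = i} = (\<lambda>w. (walsh k f w)\<^sup>2) ` {w\<in>cube k. wt w = i}" by auto
    then show ?thesis using finite_cube by simp
  qed
  have a_ge: "(walsh k f w)^2 \<le> a (wt w)" if "w \<in> cube k" for w
    unfolding a_def max_walsh_sq_wt_def using that Wset_fin by (intro Max_ge) auto
  have a_att: "\<exists>w\<in>cube k. wt w = i \<and> (walsh k f w)^2 = a i" if "i \<le> k" for i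
  proof -
    have "replicate i True @ replicate (k-i) False \<in> cube k" using that by (simp add: cube_def)
    then have ne: "{(walsh k f w)\<^sup>2 | w. w \<in> cube k \<and> wt w = i} \<noteq> {}" using wt_rep by blast
    have "a i \<in> {(walsh k f w)\<^sup>2 | w. w \<in> cube k \<and> wt w = i}"
      unfolding a_def max_walsh_sq_wt_def using Wset_fin ne by (rule Max_in)
    then show ?thesis by auto
  qed
  define T where "T = {- log 2 (a i) + real i * H | i. i \<le> k \<and> a i > 0}"
  define S where "S = {log 2 (1/(walsh (k*l) F \<alpha>)^2) | \<alpha>. \<alpha> \<in> cube (k*l) \<and> (walsh (k*l) F \<alpha>)^2 \<noteq> 0}"
  have finT: "finite T"
  proof -
    have "T = (\<lambda>i. - log 2 (a i) + real i * H) ` {i. i \<le> k \<and> a i > 0}" by (auto simp: T_def)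
    then show ?thesis by simp
  qed
  have finS: "finite S"
  proof -
    have "S = (\<lambda>\<alpha>. log 2 (1/(walsh (k*l) F \<alpha>)^2)) ` {\<alpha>\<in>cube (k*l). (walsh (k*l) F \<alpha>)^2 \<noteq> 0}" by (auto simp: S_def)
    then show ?thesis using finite_cube by simp
  qed
  have TS: "T \<subseteq> S"
  proof
    fix t assume "t \<in> T"
    then obtain i where i: "i \<le> k" "a i > 0" "t = - log 2 (a i) + real i * H" by (auto simp: T_def)
    obtain w where w: "w \<in> cube k" "wt w = i" "(walsh k f w)^2 = a i" using a_att[OF i(1)] by blast
    define bs where "bs = map (\<lambda>c. if c then \<beta> else replicate l False) w"
    have lbs: "length bs = k" using w(1) by (simp add: bs_def cube_def)
    have allb: "\<forall>b\<in>set bs. length b = l" using \<beta>(1) by (auto simp: bs_def cube_def)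
    have W: "walsh (k*l) F (concat bs) = walsh k f w * walsh l g \<beta> ^ i"
      using comp_formula[OF assms(3,2) lbs allb, of f] constr_nz[OF \<beta>nz] constr_phi[OF \<beta>nz] w(2)
      by (simp add: F_def bs_def)
    have W2: "(walsh (k*l) F (concat bs))^2 = a i * ((walsh l g \<beta>)^2) ^ i"
      unfolding W w(3)[symmetric] by (simp add: power_mult_distrib power_mult[symmetric] mult.commute)
    have q: "(walsh l g \<beta>)^2 > 0" using \<beta>(2) by simp
    have "log 2 (1/(walsh (k*l) F (concat bs))^2) = t"
      unfolding W2 i(3) \<beta>(3) using i(2) q by (simp add: log_recip log_mult log_nat_power)
    moreover have "concat bs \<in> cube (k*l)" using length_concat_eq[OF allb] lbs by (simp add: cube_def)
    moreover have "(walsh (k*l) F (concat bs))^2 \<noteq> 0" using W2 i(2) q by simp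
    ultimately show "t \<in> S" unfolding S_def by blast
  qed
  have low: "\<exists>t\<in>T. t \<le> s" if "s \<in> S" for s
  proof -
    obtain \<alpha> where \<alpha>: "\<alpha> \<in> cube (k*l)" "(walsh (k*l) F \<alpha>)^2 \<noteq> 0" "s = log 2 (1/(walsh (k*l) F \<alpha>)^2)"
      using \<open>s \<in> S\<close> by (auto simp: S_def)
    obtain bs where bs: "length bs = k" "\<forall>b\<in>set bs. length b = l" "\<alpha> = concat bs"
      using decomp[of \<alpha> k l] \<alpha>(1) unfolding cube_def by blast
    define w where "w = map (nz l) bs"
    define P where "P = prod_list (map (phi l g) bs)"
    have W: "walsh (k*l) F \<alpha> = walsh k f w * P"
      using comp_formula[OF assms(3,2) bs(1,2), of f] bs(3) by (simp add: F_def w_def P_def)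
    have Wf: "walsh k f w \<noteq> 0" and Pne: "P \<noteq> 0" using \<alpha>(2) W by auto
    have wc: "w \<in> cube k" using bs(1) by (simp add: w_def cube_def)
    have allphi: "\<forall>b\<in>set bs. phi l g b \<noteq> 0 \<and> (b \<noteq> replicate l False \<longrightarrow> log 2 (1/(walsh l g b)^2) \<ge> H)"
    proof
      fix b assume b: "b \<in> set bs"
      have "phi l g b \<noteq> 0" using Pne b by (auto simp: P_def prod_list_zero_iff)
      moreover have "b \<in> cube l" using bs(2) b by (simp add: cube_def)
      ultimately show "phi l g b \<noteq> 0 \<and> (b \<noteq> replicate l False \<longrightarrow> log 2 (1/(walsh l g b)^2) \<ge> H)"
        using Hle by (auto simp: phi_def)
    qed
    have B: "log 2 (1/P^2) \<ge> real (wt w) * H" using bound[OF allphi] by (simp add: P_def w_def)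
    have s_eq: "s = log 2 (1/(walsh k f w)^2) + log 2 (1/P^2)"
      unfolding \<alpha>(3) W using Wf Pne by (simp add: log_recip log_mult power_mult_distrib)
    have ap: "a (wt w) > 0" using a_ge[OF wc] Wf
      by (meson less_le_trans zero_less_power2)
    have "log 2 (1/(walsh k f w)^2) \<ge> - log 2 (a (wt w))"
      using a_ge[OF wc] Wf ap by (simp add: log_recip)
    then have "- log 2 (a (wt w)) + real (wt w) * H \<le> s" using s_eq B by simp
    moreover have "- log 2 (a (wt w)) + real (wt w) * H \<in> T"
      unfolding T_def using ap wt_le[of w] wc by (auto simp: cube_def)
    ultimately show ?thesis by blast
  qed
  obtain w0 where w0: "w0 \<in> cube k" "walsh k f w0 \<noteq> 0" using walsh_nonzero by blast
  have "a (wt w0) > 0" using a_ge[OF w0(1)] w0(2) by (meson less_le_trans zero_less_power2)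
  then have Tne: "T \<noteq> {}" unfolding T_def using wt_le[of w0] w0(1) by (auto simp: cube_def)
  have Sne: "S \<noteq> {}" using TS Tne by auto
  have "Min S = Min T"
  proof (rule antisym)
    show "Min S \<le> Min T" using finS TS Min_in[OF finT Tne] by (intro Min_le) auto
    obtain t where "t \<in> T" "t \<le> Min S" using low Min_in[OF finS Sne] by blast
    then show "Min T \<le> Min S" using Min_le[OF finT] by (meson order_trans)
  qed
  then show ?thesis by (simp add: S_def T_def F_def H_def a_def fourier_min_entropy_def)
qed

end
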